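(* Let $P=(V;\leq)$ be a poset and let $L=(V;\sqsubseteq)$ be a linear extension of $P$ such that whenever $x<y$ in $P$ there is $z\in V$ with $x\sqsubset z\sqsubset y$ and $z$ incomparable in $P$ to both $x$ and $y$. Then there is a poset $Q$ on the set $V\times\{0,1,2\}$ whose restriction to $V\times\{1\}$ is isomorphic to $P$ and whose restrictions to $V\times\{0\}$ and to $V\times\{2\}$ are isomorphic to $L$ (so $Q$ is a union of a copy of $P$ and two copies of $L$), such that $\bigcup AM_3(Q)=Q$ and $AM_3(Q)$ is isomorphic to $L$.
   Context: A linear extension of $P$ is a linear order on $V$ containing $\leq$. $AM_3(Q)$ is the set of three-element maximal antichains of $Q$, ordered by domination ($X\leq Y$ iff each $x\in X$ is below some $y\in Y$), and $\bigcup AM_3(Q)$ is the union of these antichains. *)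

theory Defs
  imports Main
begin

definition poset_on :: "'a set \<Rightarrow> 'a rel \<Rightarrow> bool" where
  "poset_on V r \<longleftrightarrow> r \<subseteq> V \<times> V \<and> partial_order_on V r"

definition linear_extension :: "'a set \<Rightarrow> 'a rel \<Rightarrow> 'a rel \<Rightarrow> bool" where
  "linear_extension V r l \<longleftrightarrow> l \<subseteq> V \<times> V \<and> linear_order_on V l \<and> r \<subseteq> l"

definition order_iso :: "'a set \<Rightarrow> 'a rel \<Rightarrow> 'b set \<Rightarrow> 'b rel \<Rightarrow> ('a \<Rightarrow> 'b) \<Rightarrow> bool" where
  "order_iso A r B s f \<longleftrightarrow> bij_betw f A B \<and>
     (\<forall>x\<in>A. \<forall>y\<in>A. (x, y) \<in> r \<longleftrightarrow> (f x, f y) \<in> s)"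

definition isomorphic :: "'a set \<Rightarrow> 'a rel \<Rightarrow> 'b set \<Rightarrow> 'b rel \<Rightarrow> bool" where
  "isomorphic A r B s \<longleftrightarrow> (\<exists>f. order_iso A r B s f)"

definition restrict_rel :: "'a rel \<Rightarrow> 'a set \<Rightarrow> 'a rel" where
  "restrict_rel r S = r \<inter> (S \<times> S)"

definition antichain_in :: "'a set \<Rightarrow> 'a rel \<Rightarrow> 'a set \<Rightarrow> bool" where
  "antichain_in A r X \<longleftrightarrow> X \<subseteq> A \<and> (\<forall>x\<in>X. \<forall>y\<in>X. (x, y) \<in> r \<longrightarrow> x = y)"

definition maximal_antichain :: "'a set \<Rightarrow> 'a rel \<Rightarrow> 'a set \<Rightarrow> bool" where
  "maximal_antichain A r X \<longleftrightarrow> antichain_in A r X \<and>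
     (\<forall>Y. antichain_in A r Y \<and> X \<subseteq> Y \<longrightarrow> Y = X)"

definition AM3 :: "'a set \<Rightarrow> 'a rel \<Rightarrow> 'a set set" where
  "AM3 A r = {X. maximal_antichain A r X \<and> card X = 3}"

definition dom_rel :: "'a rel \<Rightarrow> 'a set set \<Rightarrow> 'a set rel" where
  "dom_rel r M = {(X, Y). X \<in> M \<and> Y \<in> M \<and> (\<forall>x\<in>X. \<exists>y\<in>Y. (x, y) \<in> r)}"

end

theory Submission imports Defs begin

definition QQ :: "'a set \<Rightarrow> 'a rel \<Rightarrow> 'a rel \<Rightarrow> ('a \<times> nat) rel" where
  "QQ V P L = {((x,i),(y,j)). x \<in> V \<and> y \<in> V \<and> i \<in> {0,1,2} \<and> j \<in> {0,1,2} \<and>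
     ((i = j \<and> i = 1 \<and> (x,y) \<in> P) \<or> (i = j \<and> i \<noteq> 1 \<and> (x,y) \<in> L) \<or> (i < j \<and> (x,y) \<in> L \<and> x \<noteq> y))}"

locale S =
  fixes V :: "'a set" and P L :: "'a rel"
  assumes PV: "P \<subseteq> V \<times> V" and reflP: "x \<in> V \<Longrightarrow> (x,x) \<in> P"
    and transP: "(x,y) \<in> P \<Longrightarrow> (y,z) \<in> P \<Longrightarrow> (x,z) \<in> P"
    and antisymP: "(x,y) \<in> P \<Longrightarrow> (y,x) \<in> P \<Longrightarrow> x = y"
    and LV: "L \<subseteq> V \<times> V"
    and transL: "(x,y) \<in> L \<Longrightarrow> (y,z) \<in> L \<Longrightarrow> (x,z) \<in> L"
    and antisymL: "(x,y) \<in> L \<Longrightarrow> (y,x) \<in> L \<Longrightarrow> x = y"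
    and totalL: "x \<in> V \<Longrightarrow> y \<in> V \<Longrightarrow> (x,y) \<in> L \<or> (y,x) \<in> L"
    and PL: "P \<subseteq> L"
    and dense: "\<forall>x\<in>V. \<forall>y\<in>V. (x, y) \<in> P \<and> x \<noteq> y \<longrightarrow>
           (\<exists>z\<in>V. (x, z) \<in> L \<and> x \<noteq> z \<and> (z, y) \<in> L \<and> z \<noteq> y \<and>
                  (x, z) \<notin> P \<and> (z, x) \<notin> P \<and> (y, z) \<notin> P \<and> (z, y) \<notin> P)"
begin

abbreviation "Q \<equiv> QQ V P L"
abbreviation "W \<equiv> V \<times> {0::nat,1,2}"

lemma reflL: "x \<in> V \<Longrightarrow> (x,x) \<in> L" using totalL by blast

lemma Q_iff: "((x,i),(y,j)) \<in> Q \<longleftrightarrow> x \<in> V \<and> y \<in> V \<and> i \<in> {0,1,2} \<and> j \<in> {0,1,2} \<and>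
     ((i = j \<and> i = 1 \<and> (x,y) \<in> P) \<or> (i = j \<and> i \<noteq> 1 \<and> (x,y) \<in> L) \<or> (i < j \<and> (x,y) \<in> L \<and> x \<noteq> y))"
  unfolding QQ_def by simp

lemma Q_poset: "poset_on W Q"
proof -
  have sub: "Q \<subseteq> W \<times> W"
  proof
    fix pq assume "pq \<in> Q"
    then obtain x i y j where e: "pq = ((x,i),(y,j))" "((x,i),(y,j)) \<in> Q" by (metis prod.collapse)
    then show "pq \<in> W \<times> W" unfolding Q_iff by auto
  qed
  have refl: "refl_on W Q" unfolding refl_on_def
    using sub by (auto simp: Q_iff reflP reflL)
  have tr: "trans Q"
  proof (rule transI)
    fix p q r assume a: "(p,q) \<in> Q" "(q,r) \<in> Q"
    obtain x i y j z k where e: "p = (x,i)" "q = (y,j)" "r = (z,k)" by (cases p, cases q, cases r) auto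
    show "(p,r) \<in> Q" using a PL unfolding e Q_iff
      by (auto intro: transP transL dest: antisymL)
  qed
  have an: "antisym Q"
  proof (rule antisymI)
    fix p q assume a: "(p,q) \<in> Q" "(q,p) \<in> Q"
    obtain x i y j where e: "p = (x,i)" "q = (y,j)" by (cases p, cases q) auto
    show "p = q" using a unfolding e Q_iff
      by (auto intro: antisymP antisymL)
  qed
  show ?thesis unfolding poset_on_def partial_order_on_def preorder_on_def
    using sub refl tr an by auto
qed


definition Af :: "'a \<Rightarrow> ('a \<times> nat) set" where "Af x = {(x,0),(x,1),(x,2)}"

lemma anti_rel:
  assumes "antichain_in W Q X" "(y,k) \<in> X" "(z,k') \<in> X" "(y,z) \<in> L" "y \<noteq> z"
  shows "k > k' \<or> (k = 1 \<and> k' = 1)"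
proof (rule ccontr)
  assume c: "\<not> ?thesis"
  have "y \<in> V" "z \<in> V" "k \<in> {0,1,2}" "k' \<in> {0,1,2}" using assms(1-3) unfolding antichain_in_def by auto
  then have "((y,k),(z,k')) \<in> Q" using c assms(4,5) unfolding Q_iff by auto
  then show False using assms(1-3,5) unfolding antichain_in_def by blast
qed

lemma max_ex: "finite T \<Longrightarrow> T \<noteq> {} \<Longrightarrow> T \<subseteq> V \<Longrightarrow> \<exists>m\<in>T. \<forall>s\<in>T. (s,m) \<in> L"
proof (induction T rule: finite_ne_induct)
  case (singleton x) then show ?case using reflL by auto
next
  case (insert x F)
  then obtain m where m: "m \<in> F" "\<forall>s\<in>F. (s,m) \<in> L" by auto
  have "x \<in> V" "m \<in> V" using insert m by auto
  then consider "(x,m) \<in> L" | "(m,x) \<in> L" using totalL by blast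
  then show ?case
  proof cases
    case 1 then show ?thesis using m by auto
  next
    case 2 then show ?thesis using m reflL \<open>x \<in> V\<close> by (auto intro: transL)
  qed
qed

lemma min_ex: "finite T \<Longrightarrow> T \<noteq> {} \<Longrightarrow> T \<subseteq> V \<Longrightarrow> \<exists>m\<in>T. \<forall>s\<in>T. (m,s) \<in> L"
proof (induction T rule: finite_ne_induct)
  case (singleton x) then show ?case using reflL by auto
next
  case (insert x F)
  then obtain m where m: "m \<in> F" "\<forall>s\<in>F. (m,s) \<in> L" by auto
  have "x \<in> V" "m \<in> V" using insert m by auto
  then consider "(x,m) \<in> L" | "(m,x) \<in> L" using totalL by blast
  then show ?case
  proof cases
    case 2 then show ?thesis using m by auto
  next
    case 1 then show ?thesis using m reflL \<open>x \<in> V\<close> by (auto intro: transL)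
  qed
qed

lemma Af_anti: "x \<in> V \<Longrightarrow> antichain_in W Q (Af x)"
  unfolding antichain_in_def Af_def by (auto simp: Q_iff)

lemma Af_AM3: assumes "x \<in> V" shows "Af x \<in> AM3 W Q"
proof -
  have "Y = Af x" if Y: "antichain_in W Q Y" "Af x \<subseteq> Y" for Y
  proof
    show "Af x \<subseteq> Y" by fact
    show "Y \<subseteq> Af x"
    proof
      fix p assume p: "p \<in> Y"
      obtain y k where e: "p = (y,k)" by (cases p)
      have yk: "y \<in> V" "k \<in> {0,1,2}" using Y(1) p e unfolding antichain_in_def by auto
      have inA: "(x,0) \<in> Y" "(x,1) \<in> Y" "(x,2) \<in> Y" using Y(2) unfolding Af_def by auto
      have ne: "\<And>q r. q \<in> Y \<Longrightarrow> r \<in> Y \<Longrightarrow> (q,r) \<in> Q \<Longrightarrow> q = r"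
        using Y(1) unfolding antichain_in_def by blast
      show "p \<in> Af x"
      proof (cases "y = x")
        case True then show ?thesis using e yk unfolding Af_def by auto
      next
        case False
        then consider "(y,x) \<in> L" | "(x,y) \<in> L" using totalL yk assms by blast
        then show ?thesis
        proof cases
          case 1
          then have "((y,k),(x,if k = 1 then 2 else k)) \<in> Q" using yk assms False by (auto simp: Q_iff)
          moreover have "(x,if k = 1 then 2 else k) \<in> Y" using inA yk by auto
          ultimately show ?thesis using ne p e False by fastforce
        next
          case 2
          then have "((x,if k = 1 then 0 else k),(y,k)) \<in> Q" using yk assms False by (auto simp: Q_iff)
          moreover have "(x,if k = 1 then 0 else k) \<in> Y" using inA yk by auto
          ultimately show ?thesis using ne p e False by fastforce
        qed
      qed
    qed
  qed
  then show ?thesis unfolding AM3_def maximal_antichain_def using Af_anti assms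
    by (auto simp: Af_def)
qed


lemma AM3_Af: assumes X: "X \<in> AM3 W Q" shows "\<exists>x\<in>V. X = Af x"
proof -
  have ma: "maximal_antichain W Q X" and c3: "card X = 3" using X unfolding AM3_def by auto
  have ac: "antichain_in W Q X" using ma unfolding maximal_antichain_def by auto
  have mx: "\<And>Y. antichain_in W Q Y \<Longrightarrow> X \<subseteq> Y \<Longrightarrow> Y = X" using ma unfolding maximal_antichain_def by auto
  have XW: "X \<subseteq> W" using ac unfolding antichain_in_def by auto
  have ne: "\<And>q r. q \<in> X \<Longrightarrow> r \<in> X \<Longrightarrow> (q,r) \<in> Q \<Longrightarrow> q = r"
    using ac unfolding antichain_in_def by blast
  have fin: "finite X" using c3 card.infinite by fastforce
  have Xne: "X \<noteq> {}" using c3 by auto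
  have SV: "fst ` X \<subseteq> V" using XW by auto
  obtain m where m: "m \<in> fst ` X" "\<forall>s\<in>fst ` X. (s,m) \<in> L" using max_ex[OF _ _ SV] fin Xne by blast
  obtain n where n: "n \<in> fst ` X" "\<forall>s\<in>fst ` X. (n,s) \<in> L" using min_ex[OF _ _ SV] fin Xne by blast
  have mV: "m \<in> V" "n \<in> V" using m n SV by auto
  obtain km where km: "(m,km) \<in> X" using m by force
  obtain kn where kn: "(n,kn) \<in> X" using n by force
  have m0: "(m,0) \<in> X"
  proof -
    have "antichain_in W Q (insert (m,0) X)"
      unfolding antichain_in_def
    proof (intro conjI ballI impI)
      show "insert (m,0) X \<subseteq> W" using XW mV by auto
      fix p q assume p: "p \<in> insert (m,0) X" and q: "q \<in> insert (m,0) X" and pq: "(p,q) \<in> Q"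
      show "p = q"
      proof (cases "p \<in> X \<and> q \<in> X")
        case True then show ?thesis using ne pq by blast
      next
        case False
        then consider "p = (m,0)" "q \<in> X" | "q = (m,0)" "p \<in> X" | "p = (m,0)" "q = (m,0)" using p q by blast
        then show ?thesis
        proof cases
          case 1
          obtain y k where e: "q = (y,k)" by (cases q)
          have "(y,m) \<in> L" using m 1 e by force
          moreover have "(m,y) \<in> L \<and> (k = 0 \<or> m \<noteq> y)" using pq 1 e by (auto simp: Q_iff)
          ultimately show ?thesis using 1 e antisymL by blast
        next
          case 2
          obtain y k where e: "p = (y,k)" by (cases p)
          have yL: "(y,m) \<in> L" using m 2 e by force
          have k0: "k = 0" using pq 2 e by (auto simp: Q_iff)
          show ?thesis
          proof (cases "y = m")
            case True then show ?thesis using 2 e k0 by simp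
          next
            case False
            have y0: "(y,0) \<in> X" using 2 e k0 by simp
            have "0 > km \<or> (0 = (1::nat) \<and> km = 1)" by (rule anti_rel[OF ac y0 km yL False])
            then show ?thesis using k0 by simp
          qed
        qed simp
      qed
    qed
    then show ?thesis using mx by blast
  qed
  have n2: "(n,2) \<in> X"
  proof -
    have "antichain_in W Q (insert (n,2) X)"
      unfolding antichain_in_def
    proof (intro conjI ballI impI)
      show "insert (n,2) X \<subseteq> W" using XW mV by auto
      fix p q assume p: "p \<in> insert (n,2) X" and q: "q \<in> insert (n,2) X" and pq: "(p,q) \<in> Q"
      show "p = q"
      proof (cases "p \<in> X \<and> q \<in> X")
        case True then show ?thesis using ne pq by blast
      next
        case False
        then consider "p = (n,2)" "q \<in> X" | "q = (n,2)" "p \<in> X" | "p = (n,2)" "q = (n,2)" using p q by blast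
        then show ?thesis
        proof cases
          case 2
          obtain y k where e: "p = (y,k)" by (cases p)
          have "(n,y) \<in> L" using n 2 e by force
          moreover have "(y,n) \<in> L \<and> (k = 2 \<or> n \<noteq> y)" using pq 2 e by (auto simp: Q_iff)
          ultimately show ?thesis using 2 e antisymL by blast
        next
          case 1
          obtain y k where e: "q = (y,k)" by (cases q)
          have yL: "(n,y) \<in> L" using n 1 e by force
          have k2: "k = 2" using pq 1 e by (auto simp: Q_iff)
          show ?thesis
          proof (cases "y = n")
            case True then show ?thesis using 1 e k2 by simp
          next
            case False
            have y2: "(y,2) \<in> X" using 1 e k2 by simp
            have "kn > 2 \<or> (kn = 1 \<and> (2::nat) = 1)" by (rule anti_rel[OF ac kn y2 yL]) (use False in auto)
            moreover have "kn \<le> 2" using kn XW by auto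
            ultimately show ?thesis using k2 by simp
          qed
        qed simp
      qed
    qed
    then show ?thesis using mx by blast
  qed
  show ?thesis
  proof (cases "n = m")
    case True
    have "X \<subseteq> Af m"
    proof
      fix p assume p: "p \<in> X"
      obtain y k where e: "p = (y,k)" by (cases p)
      have "(y,m) \<in> L" "(n,y) \<in> L" using m n p e by force+
      then have "y = m" using True antisymL by blast
      then show "p \<in> Af m" using XW p e unfolding Af_def by auto
    qed
    then have "Af m = X" using mx Af_anti mV by blast
    then show ?thesis using mV by auto
  next
    case False
    have nm: "(n,m) \<in> L" using n m by blast
    have "(m,0::nat) \<noteq> (n,2)" by simp
    then have "card {(m,0::nat),(n,2)} = 2" by simp
    have "\<not> X \<subseteq> {(m,0),(n,2)}"
    proof
      assume "X \<subseteq> {(m,0),(n,2)}"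
      then have "card X \<le> card {(m,0::nat),(n,2)}" by (intro card_mono) auto
      then show False using c3 \<open>card {(m,0::nat),(n,2)} = 2\<close> by simp
    qed
    then obtain p where p: "p \<in> X" "p \<notin> {(m,0),(n,2)}" by blast
    have Xeq: "X = {(m,0),(n,2),p}"
    proof -
      have sub: "{(m,0),(n,2),p} \<subseteq> X" using p m0 n2 by auto
      have "card {(m,0),(n,2),p} = 3" using p(2) by auto
      then show ?thesis using card_subset_eq[OF fin sub] c3 by simp
    qed
    obtain b k where e: "p = (b,k)" by (cases p)
    have bV: "b \<in> V" and kk: "k \<in> {0,1,2}" using p XW e by auto
    have bm: "(b,m) \<in> L" and nb: "(n,b) \<in> L" using m n p e by force+
    have k1: "k = 1"
    proof -
      have "k \<noteq> 0"
      proof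
        assume k0: "k = 0"
        then have "b \<noteq> m" using p e by auto
        then show False using anti_rel[OF ac _ m0 bm] p e k0 by fastforce
      qed
      moreover have "k \<noteq> 2"
      proof
        assume k2: "k = 2"
        then have "n \<noteq> b" using p e by auto
        then show False using anti_rel[OF ac n2 _ nb] p e k2 by fastforce
      qed
      ultimately show ?thesis using kk by auto
    qed
    obtain d where d: "d \<in> V" "d \<noteq> b" "(d,b) \<notin> P" "(b,d) \<notin> P" "(n,d) \<in> L" "(d,m) \<in> L"
    proof (cases "n = b")
      case True
      then have bm': "b \<noteq> m" using False by simp
      show ?thesis
      proof (cases "(b,m) \<in> P")
        case True
        then obtain z where "z \<in> V" "(b, z) \<in> L" "b \<noteq> z" "(z, m) \<in> L" "z \<noteq> m"
          "(b, z) \<notin> P" "(z, b) \<notin> P" "(m, z) \<notin> P" "(z, m) \<notin> P"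
          using dense bV mV bm' by blast
        then show ?thesis using that \<open>n = b\<close> by blast
      next
        case False
        have "(m,b) \<notin> P" using PL bm antisymL bm' by blast
        then show ?thesis using that[of m] False bm' mV nm reflL by auto
      qed
    next
      case nb': False
      show ?thesis
      proof (cases "(n,b) \<in> P")
        case True
        then obtain z where "z \<in> V" "(n, z) \<in> L" "n \<noteq> z" "(z, b) \<in> L" "z \<noteq> b"
          "(n, z) \<notin> P" "(z, n) \<notin> P" "(b, z) \<notin> P" "(z, b) \<notin> P"
          using dense bV mV nb' by blast
        then show ?thesis using that[of z] transL bm by blast
      next
        case False
        have "(b,n) \<notin> P" using PL nb antisymL nb' by blast
        then show ?thesis using that[of n] False nb' mV nm reflL by auto
      qed
    qed
    have "antichain_in W Q (insert (d,1) X)"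
      unfolding antichain_in_def
    proof (intro conjI ballI impI)
      show "insert (d,1) X \<subseteq> W" using XW d by auto
      fix q r assume q: "q \<in> insert (d,1) X" and r: "r \<in> insert (d,1) X" and qr: "(q,r) \<in> Q"
      show "q = r"
      proof (cases "q \<in> X \<and> r \<in> X")
        case True then show ?thesis using ne qr by blast
      next
        case F: False
        have "q = r \<or> q = (d,1) \<and> r \<in> {(m,0),(n,2),(b,1)} \<or> r = (d,1) \<and> q \<in> {(m,0),(n,2),(b,1)}"
          using q r F Xeq e k1 by auto
        then show ?thesis using qr d antisymL unfolding Q_iff by (auto simp: Q_iff)
      qed
    qed
    then have "(d,1) \<in> X" using mx by blast
    then have False using Xeq e k1 d False antisymL nm by auto
    then show ?thesis ..
  qed
qed


lemma AM3_eq: "AM3 W Q = Af ` V"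
proof
  show "AM3 W Q \<subseteq> Af ` V" using AM3_Af by (auto simp: image_iff)
  show "Af ` V \<subseteq> AM3 W Q" using Af_AM3 by auto
qed

lemma Af_inj: "inj_on Af V"
proof (rule inj_onI)
  fix x y assume xy: "Af x = Af y"
  have "(x,0) \<in> Af x" by (simp add: Af_def)
  then have "(x,0) \<in> Af y" using xy by simp
  then show "x = y" unfolding Af_def by simp
qed

lemma dom_Af: assumes "x \<in> V" "y \<in> V"
  shows "(Af x, Af y) \<in> dom_rel Q (AM3 W Q) \<longleftrightarrow> (x,y) \<in> L"
proof
  assume "(Af x, Af y) \<in> dom_rel Q (AM3 W Q)"
  then have "\<exists>q\<in>Af y. ((x,2),q) \<in> Q" unfolding dom_rel_def Af_def by auto
  then show "(x,y) \<in> L" unfolding Af_def by (auto simp: Q_iff)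
next
  assume xy: "(x,y) \<in> L"
  have "\<forall>p\<in>Af x. \<exists>q\<in>Af y. (p,q) \<in> Q"
  proof (cases "x = y")
    case True then show ?thesis using assms unfolding Af_def by (auto simp: Q_iff reflP reflL)
  next
    case False
    have "((x,0),(y,0)) \<in> Q" "((x,1),(y,2)) \<in> Q" "((x,2),(y,2)) \<in> Q"
      using assms xy False by (auto simp: Q_iff)
    then show ?thesis unfolding Af_def by auto
  qed
  then show "(Af x, Af y) \<in> dom_rel Q (AM3 W Q)"
    unfolding dom_rel_def using Af_AM3 assms by auto
qed

lemma bij_fst: "bij_betw fst (V \<times> {c}) V"
proof -
  have "inj_on fst (V \<times> {c})" by (rule inj_onI) auto
  moreover have "fst ` (V \<times> {c}) = V" by force
  ultimately show ?thesis unfolding bij_betw_def by simp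
qed

lemma restr_iso: assumes "c \<in> {0,1,2}"
  shows "order_iso (V \<times> {c}) (restrict_rel Q (V \<times> {c})) V (if c = 1 then P else L) fst"
  unfolding order_iso_def
proof (intro conjI ballI)
  show "bij_betw fst (V \<times> {c}) V" by (rule bij_fst)
  fix p q assume p: "p \<in> V \<times> {c}" and q: "q \<in> V \<times> {c}"
  obtain x where x: "p = (x,c)" "x \<in> V" using p by auto
  obtain y where y: "q = (y,c)" "y \<in> V" using q by auto
  show "(p, q) \<in> restrict_rel Q (V \<times> {c}) \<longleftrightarrow> (fst p, fst q) \<in> (if c = 1 then P else L)"
    unfolding x y restrict_rel_def using x y assms by (simp add: Q_iff)
qed

lemma main: "poset_on W Q \<and>
           isomorphic (V \<times> {1}) (restrict_rel Q (V \<times> {1})) V P \<and>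
           isomorphic (V \<times> {0}) (restrict_rel Q (V \<times> {0})) V L \<and>
           isomorphic (V \<times> {2}) (restrict_rel Q (V \<times> {2})) V L \<and>
           \<Union>(AM3 W Q) = W \<and>
           isomorphic (AM3 W Q) (dom_rel Q (AM3 W Q)) V L"
proof (intro conjI)
  show "poset_on W Q" by (rule Q_poset)
  show "isomorphic (V \<times> {1}) (restrict_rel Q (V \<times> {1})) V P"
    unfolding isomorphic_def using restr_iso[of 1] by auto
  show "isomorphic (V \<times> {0}) (restrict_rel Q (V \<times> {0})) V L"
    unfolding isomorphic_def using restr_iso[of 0] by auto
  show "isomorphic (V \<times> {2}) (restrict_rel Q (V \<times> {2})) V L"
    unfolding isomorphic_def using restr_iso[of 2] by auto
  show "\<Union>(AM3 W Q) = W"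
  proof
    show "\<Union>(AM3 W Q) \<subseteq> W" unfolding AM3_eq Af_def by auto
    show "W \<subseteq> \<Union>(AM3 W Q)"
    proof
      fix p assume "p \<in> W"
      then obtain x k where "p = (x,k)" "x \<in> V" "k \<in> {0,1,2}" by auto
      then have "p \<in> Af x" "Af x \<in> AM3 W Q" unfolding AM3_eq Af_def by auto
      then show "p \<in> \<Union>(AM3 W Q)" by blast
    qed
  qed
  have b: "bij_betw (the_inv_into V Af) (Af ` V) V"
    by (rule bij_betw_the_inv_into) (simp add: bij_betw_def Af_inj)
  show "isomorphic (AM3 W Q) (dom_rel Q (AM3 W Q)) V L"
    unfolding isomorphic_def order_iso_def
  proof (intro exI[of _ "the_inv_into V Af"] conjI ballI)
    show "bij_betw (the_inv_into V Af) (AM3 W Q) V" using b AM3_eq by simp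
    fix X Y assume "X \<in> AM3 W Q" "Y \<in> AM3 W Q"
    then obtain x y where xy: "x \<in> V" "y \<in> V" "X = Af x" "Y = Af y" using AM3_eq by auto
    have "the_inv_into V Af X = x" "the_inv_into V Af Y = y"
      using xy the_inv_into_f_f[OF Af_inj] by simp_all
    then show "(X, Y) \<in> dom_rel Q (AM3 W Q) \<longleftrightarrow> (the_inv_into V Af X, the_inv_into V Af Y) \<in> L"
      using dom_Af xy by simp
  qed
qed

end

theorem lemma6p6:
  fixes V :: "'a set" and P L :: "'a rel"
  assumes "poset_on V P"
    and "linear_extension V P L"
    and "\<forall>x\<in>V. \<forall>y\<in>V. (x, y) \<in> P \<and> x \<noteq> y \<longrightarrow>
           (\<exists>z\<in>V. (x, z) \<in> L \<and> x \<noteq> z \<and> (z, y) \<in> L \<and> z \<noteq> y \<and>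
                  (x, z) \<notin> P \<and> (z, x) \<notin> P \<and> (y, z) \<notin> P \<and> (z, y) \<notin> P)"
  shows "\<exists>Q :: ('a \<times> nat) rel.
           poset_on (V \<times> {0, 1, 2}) Q \<and>
           isomorphic (V \<times> {1}) (restrict_rel Q (V \<times> {1})) V P \<and>
           isomorphic (V \<times> {0}) (restrict_rel Q (V \<times> {0})) V L \<and>
           isomorphic (V \<times> {2}) (restrict_rel Q (V \<times> {2})) V L \<and>
           \<Union>(AM3 (V \<times> {0, 1, 2}) Q) = V \<times> {0, 1, 2} \<and>
           isomorphic (AM3 (V \<times> {0, 1, 2}) Q) (dom_rel Q (AM3 (V \<times> {0, 1, 2}) Q)) V L"
proof -
  have "S V P L"
  proof
    show "P \<subseteq> V \<times> V" using assms(1) unfolding poset_on_def by auto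
    show "L \<subseteq> V \<times> V" using assms(2) unfolding linear_extension_def by auto
    show "P \<subseteq> L" using assms(2) unfolding linear_extension_def by auto
    show "\<forall>x\<in>V. \<forall>y\<in>V. (x, y) \<in> P \<and> x \<noteq> y \<longrightarrow>
           (\<exists>z\<in>V. (x, z) \<in> L \<and> x \<noteq> z \<and> (z, y) \<in> L \<and> z \<noteq> y \<and>
                  (x, z) \<notin> P \<and> (z, x) \<notin> P \<and> (y, z) \<notin> P \<and> (z, y) \<notin> P)" by (rule assms(3))
    have po: "partial_order_on V P" using assms(1) unfolding poset_on_def by auto
    show "x \<in> V \<Longrightarrow> (x,x) \<in> P" for x using po unfolding partial_order_on_def preorder_on_def refl_on_def by auto
    show "(x,y) \<in> P \<Longrightarrow> (y,z) \<in> P \<Longrightarrow> (x,z) \<in> P" for x y z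
      using po unfolding partial_order_on_def preorder_on_def trans_def by blast
    show "(x,y) \<in> P \<Longrightarrow> (y,x) \<in> P \<Longrightarrow> x = y" for x y
      using po unfolding partial_order_on_def antisym_def by blast
    have lo: "linear_order_on V L" using assms(2) unfolding linear_extension_def by auto
    show "(x,y) \<in> L \<Longrightarrow> (y,z) \<in> L \<Longrightarrow> (x,z) \<in> L" for x y z
      using lo unfolding linear_order_on_def partial_order_on_def preorder_on_def trans_def by blast
    show "(x,y) \<in> L \<Longrightarrow> (y,x) \<in> L \<Longrightarrow> x = y" for x y
      using lo unfolding linear_order_on_def partial_order_on_def antisym_def by blast
    show "x \<in> V \<Longrightarrow> y \<in> V \<Longrightarrow> (x,y) \<in> L \<or> (y,x) \<in> L" for x y
      using lo unfolding linear_order_on_def partial_order_on_def preorder_on_def refl_on_def total_on_def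
      by (cases "x = y") auto
  qed
  then show ?thesis using S.main by blast
qed

end
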